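(* For each $d\ge1$ let $B$ be a random $d\times d$ matrix with independent entries $B_{ij}\in\{0,1\}$, $\mathbb P(B_{ij}=1)=1/d$. For a positive integer $k$, let $P(k)$ be the set of set partitions of $\{1,\dots,k\}$, and let $S_k=\{(1,1),(2,1),(2,2),(3,2),\dots,(k,k),(1,k)\}$, i.e. the pairs $(t,t)$ and $(t+1,t)$ for $t=1,\dots,k$ with indices taken mod $k$ (so $k+1\equiv1$). For a pair $p_i,p_j\in P(k)$ let $p_{ij}$ be the partition of $S_k$ in which $(a_1,b_1)$ and $(a_2,b_2)$ lie in the same block if and only if $a_1,a_2$ lie in the same block of $p_i$ and $b_1,b_2$ lie in the same block of $p_j$. Writing $|p|$ for the number of blocks of a partition $p$, the $k$-th moment of the limiting averaged spectral distribution of $BB^t$, $$m_k=\lim_{d\to\infty}\frac1d\,\mathbb E_B\operatorname{tr}\big[(BB^t)^k\big],$$ equals the number of pairs $(p_i,p_j)\in P(k)\times P(k)$ with $|p_i|+|p_j|-|p_{ij}|=1$.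
   Context: $B$ is called a Bernoulli random matrix with parameter $p=1/d$; the eigenvalues of $BB^t$ are the squared singular values of $B$. *)

theory Defs
  imports "HOL-Probability.Probability" "HOL-Library.Disjoint_Sets" "Jordan_Normal_Form.Matrix"
begin

definition mat_trace :: "'a::comm_ring_1 mat \<Rightarrow> 'a" where
  "mat_trace A = (\<Sum>i<dim_row A. A $$ (i, i))"

text \<open>Bernoulli random d x d 0/1 matrix with parameter 1/d: the law of the entry pattern,
  as a pmf on functions {..<d} x {..<d} -> bool (independent Bernoulli(1/d) entries).\<close>
definition bernoulli_matrix_pmf :: "nat \<Rightarrow> (nat \<times> nat \<Rightarrow> bool) pmf" where
  "bernoulli_matrix_pmf d = Pi_pmf ({..<d} \<times> {..<d}) False (\<lambda>_. bernoulli_pmf (1 / real d))"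

definition to_matrix :: "nat \<Rightarrow> (nat \<times> nat \<Rightarrow> bool) \<Rightarrow> real mat" where
  "to_matrix d M = mat d d (\<lambda>ij. if M ij then 1 else 0)"

definition set_partitions :: "nat \<Rightarrow> nat set set set" where
  "set_partitions k = {P. partition_on {1..k} P}"

definition S_set :: "nat \<Rightarrow> (nat \<times> nat) set" where
  "S_set k = {(t, t) | t. t \<in> {1..k}} \<union> {(t mod k + 1, t) | t. t \<in> {1..k}}"

definition same_block :: "'a set set \<Rightarrow> 'a \<Rightarrow> 'a \<Rightarrow> bool" where
  "same_block P a b \<longleftrightarrow> (\<exists>B\<in>P. a \<in> B \<and> b \<in> B)"

definition joint_partition :: "nat \<Rightarrow> nat set set \<Rightarrow> nat set set \<Rightarrow> (nat \<times> nat) set set" where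
  "joint_partition k p1 p2 =
     S_set k // {(x, y). x \<in> S_set k \<and> y \<in> S_set k \<and>
                   same_block p1 (fst x) (fst y) \<and> same_block p2 (snd x) (snd y)}"

end

theory Submission
  imports Defs
begin

lemma walk_bound:
  fixes i j :: "nat \<Rightarrow> nat" and k :: nat
  assumes k: "k \<ge> 1"
  shows "card (i ` {1..k}) + card (j ` {1..k}) \<le> card ((\<lambda>(a,b). (i a, j b)) ` S_set k) + 1"
proof -
  define v :: "nat \<Rightarrow> nat + nat" where
    "v s = (if even s then Inl (i (s div 2 + 1)) else Inr (j (s div 2 + 1)))" for s
  define e :: "nat \<Rightarrow> nat \<times> nat" where
    "e s = (if even s then (i (s div 2 + 1), j (s div 2 + 1)) else (i (s div 2 + 2), j (s div 2 + 1)))" for s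
  define ends :: "nat \<times> nat \<Rightarrow> (nat + nat) set" where "ends x = {Inl (fst x), Inr (snd x)}" for x
  have ends_eq: "ends (e s) = {v s, v (Suc s)}" for s
  proof (cases "even s")
    case True
    then have "Suc s div 2 = s div 2" by presburger
    then show ?thesis using True by (auto simp: ends_def e_def v_def)
  next
    case False
    then have "Suc s div 2 = s div 2 + 1" by presburger
    then show ?thesis using False by (auto simp: ends_def e_def v_def)
  qed
  have main: "card (v ` {..m}) \<le> card (e ` {..<m}) + 1" for m
  proof (induction m)
    case 0
    then show ?case by simp
  next
    case (Suc m)
    have v1: "v ` {..Suc m} = insert (v (Suc m)) (v ` {..m})"
      by (auto simp: atMost_Suc)
    have e1: "e ` {..<Suc m} = insert (e m) (e ` {..<m})"
      by (auto simp: lessThan_Suc)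
    show ?case
    proof (cases "v (Suc m) \<in> v ` {..m}")
      case True
      then have "card (v ` {..Suc m}) = card (v ` {..m})" using v1 by (simp add: insert_absorb)
      moreover have "card (e ` {..<m}) \<le> card (e ` {..<Suc m})"
        unfolding e1 by (intro card_mono) auto
      ultimately show ?thesis using Suc.IH by linarith
    next
      case False
      have "e m \<notin> e ` {..<m}"
      proof
        assume "e m \<in> e ` {..<m}"
        then obtain s where s: "s < m" "e m = e s" by auto
        have "v (Suc m) \<in> ends (e m)" using ends_eq by auto
        then have "v (Suc m) \<in> {v s, v (Suc s)}" using s ends_eq by metis
        moreover have "{v s, v (Suc s)} \<subseteq> v ` {..m}" using s by auto
        ultimately show False using False by auto
      qed
      then have "card (e ` {..<Suc m}) = card (e ` {..<m}) + 1" unfolding e1 by simp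
      moreover have "card (v ` {..Suc m}) = card (v ` {..m}) + 1" unfolding v1 using False by simp
      ultimately show ?thesis using Suc.IH by linarith
    qed
  qed
  define m where "m = 2 * k - 1"
  have vset: "v ` {..m} = Inl ` (i ` {1..k}) \<union> Inr ` (j ` {1..k})"
  proof
    show "v ` {..m} \<subseteq> Inl ` (i ` {1..k}) \<union> Inr ` (j ` {1..k})"
    proof
      fix x assume "x \<in> v ` {..m}"
      then obtain s where s: "s \<le> m" "x = v s" by auto
      have "s div 2 + 1 \<in> {1..k}" using s(1) k unfolding m_def by auto
      then show "x \<in> Inl ` (i ` {1..k}) \<union> Inr ` (j ` {1..k})"
        using s(2) unfolding v_def by auto
    qed
  next
    show "Inl ` (i ` {1..k}) \<union> Inr ` (j ` {1..k}) \<subseteq> v ` {..m}"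
    proof
      fix x assume "x \<in> Inl ` (i ` {1..k}) \<union> Inr ` (j ` {1..k})"
      then consider a where "a \<in> {1..k}" "x = Inl (i a)" | a where "a \<in> {1..k}" "x = Inr (j a)" by auto
      then show "x \<in> v ` {..m}"
      proof cases
        case 1
        then have "v (2 * (a - 1)) = x" "2 * (a - 1) \<le> m" unfolding v_def m_def by auto
        then show ?thesis by (metis atMost_iff imageI)
      next
        case 2
        then have "v (2 * (a - 1) + 1) = x" "2 * (a - 1) + 1 \<le> m" unfolding v_def m_def by auto
        then show ?thesis by (metis atMost_iff imageI)
      qed
    qed
  qed
  have cardv: "card (v ` {..m}) = card (i ` {1..k}) + card (j ` {1..k})"
    unfolding vset by (subst card_Un_disjoint) (auto simp: card_image)
  have esub: "e ` {..<m} \<subseteq> (\<lambda>(a,b). (i a, j b)) ` S_set k"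
  proof
    fix x assume "x \<in> e ` {..<m}"
    then obtain s where s: "s < m" "x = e s" by auto
    define t where "t = s div 2 + 1"
    have t: "t \<in> {1..k}" using s k unfolding t_def m_def by auto
    show "x \<in> (\<lambda>(a,b). (i a, j b)) ` S_set k"
    proof (cases "even s")
      case True
      then have "x = (\<lambda>(a,b). (i a, j b)) (t, t)" using s unfolding e_def t_def by auto
      moreover have "(t, t) \<in> S_set k" using t unfolding S_set_def by auto
      ultimately show ?thesis by blast
    next
      case False
      then have "t < k" using s unfolding t_def m_def by presburger
      then have tm: "t mod k + 1 = t + 1" by simp
      have "x = (\<lambda>(a,b). (i a, j b)) (t + 1, t)" using s False unfolding e_def t_def by auto
      moreover have "(t + 1, t) \<in> S_set k" using t tm unfolding S_set_def by force
      ultimately show ?thesis by blast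
    qed
  qed
  have fin: "finite (S_set k)" unfolding S_set_def by auto
  have "card (e ` {..<m}) \<le> card ((\<lambda>(a,b). (i a, j b)) ` S_set k)"
    by (rule card_mono[OF _ esub]) (use fin in auto)
  then show ?thesis using main[of m] cardv by linarith
qed

definition ker :: "(nat \<Rightarrow> nat) \<Rightarrow> nat \<Rightarrow> nat set set" where
  "ker i k = (\<lambda>b. {a\<in>{1..k}. i a = i b}) ` {1..k}"

lemma fiber_inj: "inj_on (\<lambda>v. {a\<in>A. f a = v}) (f ` A)"
proof (rule inj_onI)
  fix x y assume "x \<in> f ` A" "y \<in> f ` A" and eq: "{a\<in>A. f a = x} = {a\<in>A. f a = y}"
  then obtain a where a: "a \<in> A" "f a = x" by auto
  then have "a \<in> {a\<in>A. f a = y}" using eq by blast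
  then show "x = y" using a by simp
qed

lemma card_ker: "card (ker i k) = card (i ` {1..k})"
proof -
  have "ker i k = (\<lambda>v. {a\<in>{1..k}. i a = v}) ` (i ` {1..k})"
    unfolding ker_def by (simp add: image_image)
  then show ?thesis using fiber_inj[of "{1..k}" i] by (simp add: card_image)
qed

lemma same_block_ker: "same_block (ker i k) a b \<longleftrightarrow> a \<in> {1..k} \<and> b \<in> {1..k} \<and> i a = i b"
  unfolding same_block_def ker_def by auto
lemma ker_partition: "partition_on {1..k} (ker i k)"
proof (rule partition_onI)
  show "\<Union> (ker i k) = {1..k}" unfolding ker_def by blast
  show "{} \<notin> ker i k" unfolding ker_def by blast
  fix p q assume p: "p \<in> ker i k" and q: "q \<in> ker i k" and pq: "p \<noteq> q"
  obtain b where b: "p = {a\<in>{1..k}. i a = i b}" using p unfolding ker_def by auto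
  obtain c where c: "q = {a\<in>{1..k}. i a = i c}" using q unfolding ker_def by auto
  have "i b \<noteq> i c" using b c pq by auto
  then show "disjnt p q" unfolding disjnt_def b c by auto
qed
lemma quotient_kernel:
  shows "A // {(x, y). x \<in> A \<and> y \<in> A \<and> f x = f y} = (\<lambda>v. {x\<in>A. f x = v}) ` (f ` A)"
proof -
  have "{(x, y). x \<in> A \<and> y \<in> A \<and> f x = f y} `` {a} = {x\<in>A. f x = f a}" if "a \<in> A" for a
    using that unfolding Image_def by auto
  then show ?thesis unfolding quotient_def by (auto simp: image_image)
qed
lemma card_quotient_kernel:
  assumes "finite A"
  shows "card (A // {(x, y). x \<in> A \<and> y \<in> A \<and> f x = f y}) = card (f ` A)"
  unfolding quotient_kernel using fiber_inj[of A f] by (simp add: card_image)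

lemma S_set_sub: "S_set k \<subseteq> {1..k} \<times> {1..k}"
proof
  fix x assume "x \<in> S_set k"
  then obtain t where t: "t \<in> {1..k}" "x = (t, t) \<or> x = (t mod k + 1, t)" unfolding S_set_def by blast
  then have "t mod k < k" by simp
  then have "t mod k + 1 \<le> k" by linarith
  then show "x \<in> {1..k} \<times> {1..k}" using t by auto
qed

lemma finite_S_set: "finite (S_set k)"
  by (rule finite_subset[OF S_set_sub]) auto

lemma joint_ker: "card (joint_partition k (ker i k) (ker j k)) = card ((\<lambda>(a,b). (i a, j b)) ` S_set k)"
proof -
  let ?phi = "(\<lambda>(a::nat,b::nat). (i a, j b))"
  have eqv: "(same_block (ker i k) (fst x) (fst y) \<and> same_block (ker j k) (snd x) (snd y)) \<longleftrightarrow> ?phi x = ?phi y"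
    if "x \<in> S_set k" "y \<in> S_set k" for x y
  proof -
    have "fst x \<in> {1..k}" "snd x \<in> {1..k}" "fst y \<in> {1..k}" "snd y \<in> {1..k}"
      using that S_set_sub by force+
    then show ?thesis by (cases x; cases y) (simp add: same_block_ker)
  qed
  have "{(x, y). x \<in> S_set k \<and> y \<in> S_set k \<and>
                   same_block (ker i k) (fst x) (fst y) \<and> same_block (ker j k) (snd x) (snd y)}
      = {(x, y). x \<in> S_set k \<and> y \<in> S_set k \<and> ?phi x = ?phi y}"
    using eqv by blast
  then show ?thesis unfolding joint_partition_def
    by (simp add: card_quotient_kernel finite_S_set)
qed
definition blk :: "'a set set \<Rightarrow> 'a \<Rightarrow> 'a set" where
  "blk p a = (THE B. B \<in> p \<and> a \<in> B)"

lemma part_unique: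
  assumes "partition_on A p" "B1 \<in> p" "B2 \<in> p" "a \<in> B1" "a \<in> B2"
  shows "B1 = B2"
  using assms unfolding partition_on_def disjoint_def by blast

lemma blk_eq:
  assumes "partition_on A p" "B \<in> p" "a \<in> B"
  shows "blk p a = B"
  unfolding blk_def
proof (rule the_equality)
  show "B \<in> p \<and> a \<in> B" using assms by blast
  show "C = B" if "C \<in> p \<and> a \<in> C" for C using part_unique[OF assms(1)] that assms by blast
qed

lemma blk_mem:
  assumes "partition_on A p" "a \<in> A"
  shows "blk p a \<in> p" "a \<in> blk p a"
proof -
  obtain B where "B \<in> p" "a \<in> B" using assms unfolding partition_on_def by blast
  then show "blk p a \<in> p" "a \<in> blk p a" using blk_eq[OF assms(1)] by auto
qed

lemma card_partition_le_finite: "partition_on A p \<Longrightarrow> finite A \<Longrightarrow> finite p"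
  by (rule finite_elements)

lemma count_fiber:
  assumes p: "p \<in> set_partitions k"
  shows "card {i \<in> {1..k} \<rightarrow>\<^sub>E {..<d}. ker i k = p} = prod ((-) d) {0..<card p}"
proof -
  let ?K = "{1..k::nat}" and ?D = "{..<d}"
  have P: "partition_on ?K p" using p unfolding set_partitions_def by auto
  have finp: "finite p" using finite_elements[OF _ P] by simp
  have sub: "B \<subseteq> ?K" if "B \<in> p" for B using P that unfolding partition_on_def by blast
  have ne: "B \<noteq> {}" if "B \<in> p" for B using P that unfolding partition_on_def by blast
  define Inj where "Inj = {g \<in> p \<rightarrow>\<^sub>E ?D. inj_on g p}"
  define F where "F g = restrict (\<lambda>a. g (blk p a)) ?K" for g :: "nat set \<Rightarrow> nat"
  have injF: "inj_on F Inj"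
  proof (rule inj_onI)
    fix g1 g2 assume g1: "g1 \<in> Inj" and g2: "g2 \<in> Inj" and eq: "F g1 = F g2"
    show "g1 = g2"
    proof
      fix B show "g1 B = g2 B"
      proof (cases "B \<in> p")
        case True
        then obtain a where a: "a \<in> B" using ne by blast
        then have aK: "a \<in> ?K" using sub True by blast
        have "F g1 a = F g2 a" using eq by simp
        then show ?thesis using blk_eq[OF P True a] aK unfolding F_def by simp
      next
        case False
        then show ?thesis using g1 g2 unfolding Inj_def by (auto simp: PiE_def extensional_def)
      qed
    qed
  qed
  have img: "F ` Inj = {i \<in> ?K \<rightarrow>\<^sub>E ?D. ker i k = p}"
  proof
    show "F ` Inj \<subseteq> {i \<in> ?K \<rightarrow>\<^sub>E ?D. ker i k = p}"
    proof
      fix i assume "i \<in> F ` Inj"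
      then obtain g where g: "g \<in> Inj" "i = F g" by auto
      have gD: "g B \<in> ?D" if "B \<in> p" for B using g(1) that unfolding Inj_def by auto
      have ginj: "inj_on g p" using g(1) unfolding Inj_def by auto
      have iPi: "i \<in> ?K \<rightarrow>\<^sub>E ?D" unfolding g(2) F_def using gD blk_mem[OF P] by auto
      have cls: "{a \<in> ?K. i a = i b} = blk p b" if b: "b \<in> ?K" for b
      proof -
        have "i a = i b \<longleftrightarrow> blk p a = blk p b" if a: "a \<in> ?K" for a
        proof -
          have "i a = g (blk p a)" "i b = g (blk p b)" using a b unfolding g(2) F_def by auto
          then show ?thesis using inj_on_eq_iff[OF ginj blk_mem(1)[OF P a] blk_mem(1)[OF P b]] by simp
        qed
        moreover have "a \<in> blk p b \<longleftrightarrow> blk p a = blk p b" if a: "a \<in> ?K" for a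
          using a b blk_mem[OF P] blk_eq[OF P] by metis
        ultimately show ?thesis using sub[OF blk_mem(1)[OF P b]] by blast
      qed
      have "ker i k = blk p ` ?K" unfolding ker_def using cls by auto
      also have "\<dots> = p"
      proof
        show "blk p ` ?K \<subseteq> p" using blk_mem[OF P] by auto
        show "p \<subseteq> blk p ` ?K"
        proof
          fix B assume B: "B \<in> p"
          then obtain a where a: "a \<in> B" using ne by blast
          then show "B \<in> blk p ` ?K" using blk_eq[OF P B a] sub[OF B] by force
        qed
      qed
      finally show "i \<in> {i \<in> ?K \<rightarrow>\<^sub>E ?D. ker i k = p}" using iPi by auto
    qed
  next
    show "{i \<in> ?K \<rightarrow>\<^sub>E ?D. ker i k = p} \<subseteq> F ` Inj"
    proof
      fix i assume "i \<in> {i \<in> ?K \<rightarrow>\<^sub>E ?D. ker i k = p}"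
      then have iPi: "i \<in> ?K \<rightarrow>\<^sub>E ?D" and kp: "ker i k = p" by auto
      define g where "g = restrict (\<lambda>B. i (SOME a. a \<in> B)) p"
      have some: "(SOME a. a \<in> B) \<in> B" if "B \<in> p" for B using ne[OF that] by (simp add: some_in_eq)
      have repr: "\<exists>b\<in>?K. B = {a \<in> ?K. i a = i b}" if "B \<in> p" for B
        using that kp unfolding ker_def by auto
      have gPi: "g \<in> p \<rightarrow>\<^sub>E ?D" unfolding g_def using some sub iPi by fastforce
      have ginj: "inj_on g p"
      proof (rule inj_onI)
        fix B1 B2 assume B1: "B1 \<in> p" and B2: "B2 \<in> p" and eq: "g B1 = g B2"
        obtain b1 where b1: "b1 \<in> ?K" "B1 = {a \<in> ?K. i a = i b1}" using repr[OF B1] by blast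
        obtain b2 where b2: "b2 \<in> ?K" "B2 = {a \<in> ?K. i a = i b2}" using repr[OF B2] by blast
        have "i (SOME a. a \<in> B1) = i b1" using some[OF B1] b1 by auto
        moreover have "i (SOME a. a \<in> B2) = i b2" using some[OF B2] b2 by auto
        ultimately have "i b1 = i b2" using eq B1 B2 unfolding g_def by simp
        then show "B1 = B2" using b1 b2 by simp
      qed
      have "F g = i"
      proof
        fix a show "F g a = i a"
        proof (cases "a \<in> ?K")
          case True
          have Bp: "blk p a \<in> p" and aB: "a \<in> blk p a" using blk_mem[OF P True] by auto
          obtain b where b: "b \<in> ?K" "blk p a = {x \<in> ?K. i x = i b}" using repr[OF Bp] by blast
          have "i (SOME x. x \<in> blk p a) = i b" using some[OF Bp] b by auto
          moreover have "i a = i b" using aB b by auto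
          ultimately show ?thesis using True Bp unfolding F_def g_def by simp
        next
          case False
          then show ?thesis using iPi unfolding F_def by (auto simp: PiE_def extensional_def)
        qed
      qed
      then show "i \<in> F ` Inj" using gPi ginj unfolding Inj_def by blast
    qed
  qed
  have "card {i \<in> ?K \<rightarrow>\<^sub>E ?D. ker i k = p} = card Inj"
    using card_image[OF injF] img by simp
  also have "\<dots> = prod ((-) d) {0..<card p}"
    unfolding Inj_def using card_inj_on_subset_funcset[OF finp, of ?D p] by simp
  finally show ?thesis .
qed

lemma ker_in: "ker i k \<in> set_partitions k"
  using ker_partition unfolding set_partitions_def by simp

lemma mult_entry:
  fixes A B :: "real mat"
  assumes "A \<in> carrier_mat d d" "B \<in> carrier_mat d d" "a < d" "b < d"
  shows "(A * B) $$ (a, b) = (\<Sum>c<d. A $$ (a, c) * B $$ (c, b))"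
  using assms by (simp add: scalar_prod_def lessThan_atLeast0)

lemma pow_entry:
  fixes C :: "real mat"
  assumes C: "C \<in> carrier_mat d d" and a: "a < d"
  shows "b < d \<Longrightarrow> (C ^\<^sub>m (Suc m)) $$ (a, b) =
    (\<Sum>g \<in> {g \<in> {1..Suc m} \<rightarrow>\<^sub>E {..<d}. g 1 = a}.
        \<Prod>t\<in>{1..Suc m}. C $$ (g t, if t = Suc m then b else g (Suc t)))"
proof (induction m arbitrary: b)
  case 0
  have "{g \<in> {1..Suc 0} \<rightarrow>\<^sub>E {..<d}. g 1 = a} = {restrict (\<lambda>_. a) {1}}"
  proof
    show "{g \<in> {1..Suc 0} \<rightarrow>\<^sub>E {..<d}. g 1 = a} \<subseteq> {restrict (\<lambda>_. a) {1}}"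
      by (auto simp: PiE_def extensional_def restrict_def fun_eq_iff)
    show "{restrict (\<lambda>_. a) {1}} \<subseteq> {g \<in> {1..Suc 0} \<rightarrow>\<^sub>E {..<d}. g 1 = a}"
      using a by auto
  qed
  then show ?case using C by simp
next
  case (Suc m)
  let ?n = "Suc m"
  let ?G = "\<lambda>n. {g \<in> {1..n} \<rightarrow>\<^sub>E {..<d}. g 1 = a}"
  have "(C ^\<^sub>m (Suc ?n)) $$ (a, b) = (\<Sum>c<d. (C ^\<^sub>m ?n) $$ (a, c) * C $$ (c, b))"
  proof -
    have e: "C ^\<^sub>m (Suc ?n) = C ^\<^sub>m ?n * C" by simp
    show ?thesis unfolding e by (rule mult_entry[OF pow_carrier_mat[OF C] C a Suc.prems])
  qed
  also have "\<dots> = (\<Sum>c<d. \<Sum>g\<in>?G ?n. (\<Prod>t\<in>{1..?n}. C $$ (g t, if t = ?n then c else g (Suc t))) * C $$ (c, b))"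
    using Suc.IH by (simp add: sum_distrib_right)
  also have "\<dots> = (\<Sum>x\<in>{..<d} \<times> ?G ?n. (\<Prod>t\<in>{1..?n}. C $$ (snd x t, if t = ?n then fst x else snd x (Suc t))) * C $$ (fst x, b))"
    by (simp add: sum.cartesian_product case_prod_unfold)
  also have "\<dots> = (\<Sum>g\<in>?G (Suc ?n). \<Prod>t\<in>{1..Suc ?n}. C $$ (g t, if t = Suc ?n then b else g (Suc t)))"
  proof (rule sum.reindex_bij_witness[where j = "\<lambda>x. (snd x)(Suc ?n := fst x)" and i = "\<lambda>g. (g (Suc ?n), g(Suc ?n := undefined))"])
    fix g assume g: "g \<in> ?G (Suc ?n)"
    show "(\<lambda>x. (snd x)(Suc ?n := fst x)) (g (Suc ?n), g(Suc ?n := undefined)) = g" by simp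
    show "(g (Suc ?n), g(Suc ?n := undefined)) \<in> {..<d} \<times> ?G ?n"
      using g by (auto simp: PiE_def extensional_def)
  next
    fix x assume x: "x \<in> {..<d} \<times> ?G ?n"
    then show "(\<lambda>g. (g (Suc ?n), g(Suc ?n := undefined))) ((\<lambda>x. (snd x)(Suc ?n := fst x)) x) = x"
      by (cases x) (auto simp: PiE_def extensional_def fun_eq_iff)
    show "(\<lambda>x. (snd x)(Suc ?n := fst x)) x \<in> ?G (Suc ?n)"
      using x by (cases x) (auto simp: PiE_def extensional_def)
    obtain c g where cg: "x = (c, g)" by (cases x)
    let ?g' = "g(Suc ?n := c)"
    have "(\<Prod>t\<in>{1..Suc ?n}. C $$ (?g' t, if t = Suc ?n then b else ?g' (Suc t)))
        = (\<Prod>t\<in>{1..?n}. C $$ (?g' t, if t = Suc ?n then b else ?g' (Suc t))) * C $$ (c, b)"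
      by (simp add: atLeastAtMostSuc_conv mult.commute)
    also have "(\<Prod>t\<in>{1..?n}. C $$ (?g' t, if t = Suc ?n then b else ?g' (Suc t)))
        = (\<Prod>t\<in>{1..?n}. C $$ (g t, if t = ?n then c else g (Suc t)))"
      by (rule prod.cong) auto
    finally show "(\<Prod>t\<in>{1..Suc ?n}. C $$ ((\<lambda>x. (snd x)(Suc ?n := fst x)) x t,
                    if t = Suc ?n then b else (\<lambda>x. (snd x)(Suc ?n := fst x)) x (Suc t))) =
          (\<Prod>t\<in>{1..?n}. C $$ (snd x t, if t = ?n then fst x else snd x (Suc t))) * C $$ (fst x, b)"
      unfolding cg by simp
  qed
  finally show ?case .
qed

lemma trace_pow:
  fixes C :: "real mat"
  assumes C: "C \<in> carrier_mat d d" and k: "k \<ge> 1"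
  shows "mat_trace (C ^\<^sub>m k) = (\<Sum>g \<in> {1..k} \<rightarrow>\<^sub>E {..<d}. \<Prod>t\<in>{1..k}. C $$ (g t, g (t mod k + 1)))"
proof -
  obtain m where m: "k = Suc m" using k by (cases k) auto
  let ?I = "{1..k} \<rightarrow>\<^sub>E {..<d}"
  let ?H = "\<lambda>g. \<Prod>t\<in>{1..k}. C $$ (g t, g (t mod k + 1))"
  have "mat_trace (C ^\<^sub>m k) = (\<Sum>a<d. (C ^\<^sub>m k) $$ (a, a))"
    unfolding mat_trace_def using C by (simp add: carrier_matD)
  also have "\<dots> = (\<Sum>a<d. \<Sum>g \<in> {g \<in> ?I. g 1 = a}. ?H g)"
  proof (rule sum.cong[OF refl])
    fix a assume a: "a \<in> {..<d}"
    have "(C ^\<^sub>m k) $$ (a, a) = (\<Sum>g \<in> {g \<in> ?I. g 1 = a}.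
        \<Prod>t\<in>{1..k}. C $$ (g t, if t = k then a else g (Suc t)))"
      unfolding m using pow_entry[OF C, of a a m] a by simp
    also have "\<dots> = (\<Sum>g \<in> {g \<in> ?I. g 1 = a}. ?H g)"
    proof (rule sum.cong[OF refl], rule prod.cong[OF refl])
      fix g t assume g: "g \<in> {g \<in> ?I. g 1 = a}" and t: "t \<in> {1..k}"
      show "C $$ (g t, if t = k then a else g (Suc t)) = C $$ (g t, g (t mod k + 1))"
      proof (cases "t = k")
        case True then show ?thesis using g by simp
      next
        case False then have "t < k" using t by simp
        then show ?thesis using False by simp
      qed
    qed
    finally show "(C ^\<^sub>m k) $$ (a, a) = (\<Sum>g \<in> {g \<in> ?I. g 1 = a}. ?H g)" .
  qed
  also have "\<dots> = (\<Sum>g \<in> ?I. ?H g)"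
    by (rule sum.group) (use k in \<open>auto simp: finite_PiE\<close>)
  finally show ?thesis .
qed

lemma trace_formula:
  fixes A :: "real mat"
  assumes A: "A \<in> carrier_mat d d" and k: "k \<ge> 1"
  shows "mat_trace ((A * A\<^sup>T) ^\<^sub>m k) = (\<Sum>g \<in> {1..k} \<rightarrow>\<^sub>E {..<d}. \<Sum>h \<in> {1..k} \<rightarrow>\<^sub>E {..<d}.
      \<Prod>t\<in>{1..k}. A $$ (g t, h t) * A $$ (g (t mod k + 1), h t))"
proof -
  have AT: "A\<^sup>T \<in> carrier_mat d d" using A by simp
  have C: "A * A\<^sup>T \<in> carrier_mat d d" using A by simp
  have ent: "(A * A\<^sup>T) $$ (x, y) = (\<Sum>z<d. A $$ (x, z) * A $$ (y, z))" if "x < d" "y < d" for x y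
    using mult_entry[OF A AT that] A that by simp
  have mk: "t mod k + 1 \<in> {1..k}" for t using k by (simp add: Suc_leI)
  show ?thesis
    unfolding trace_pow[OF C k]
  proof (rule sum.cong[OF refl])
    fix g assume g: "g \<in> {1..k} \<rightarrow>\<^sub>E {..<d}"
    have "(\<Prod>t\<in>{1..k}. (A * A\<^sup>T) $$ (g t, g (t mod k + 1))) =
          (\<Prod>t\<in>{1..k}. \<Sum>z\<in>{..<d}. A $$ (g t, z) * A $$ (g (t mod k + 1), z))"
      by (rule prod.cong[OF refl], rule ent) (use g mk in auto)
    also have "\<dots> = (\<Sum>h \<in> {1..k} \<rightarrow>\<^sub>E {..<d}. \<Prod>t\<in>{1..k}. A $$ (g t, h t) * A $$ (g (t mod k + 1), h t))"
      by (rule prod_sum_PiE) auto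
    finally show "(\<Prod>t\<in>{1..k}. (A * A\<^sup>T) $$ (g t, g (t mod k + 1))) =
          (\<Sum>h \<in> {1..k} \<rightarrow>\<^sub>E {..<d}. \<Prod>t\<in>{1..k}. A $$ (g t, h t) * A $$ (g (t mod k + 1), h t))" .
  qed
qed
lemma prod_indicator:
  assumes "finite T"
  shows "(\<Prod>t\<in>T. if P t then (1::real) else 0) = (if \<forall>t\<in>T. P t then 1 else 0)"
  using assms by (induction T rule: finite_induct) auto

lemma fin_support: "finite (set_pmf (bernoulli_matrix_pmf d))"
  unfolding bernoulli_matrix_pmf_def
  by (subst set_Pi_pmf) (auto intro!: finite_PiE_dflt)

lemma integrable_bm: "integrable (measure_pmf (bernoulli_matrix_pmf d)) (f :: _ \<Rightarrow> real)"
  by (rule integrable_measure_pmf_finite[OF fin_support])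

lemma expect_term:
  assumes d: "d \<ge> 1" and k: "k \<ge> 1"
    and g: "g \<in> {1..k} \<rightarrow>\<^sub>E {..<d}" and h: "h \<in> {1..k} \<rightarrow>\<^sub>E {..<d}"
  shows "measure_pmf.expectation (bernoulli_matrix_pmf d)
          (\<lambda>M. \<Prod>t\<in>{1..k}. to_matrix d M $$ (g t, h t) * to_matrix d M $$ (g (t mod k + 1), h t))
       = (1 / real d) ^ card ((\<lambda>(a,b). (g a, h b)) ` S_set k)"
proof -
  let ?E = "(\<lambda>(a,b). (g a, h b)) ` S_set k"
  let ?D2 = "{..<d} \<times> {..<d}"
  have Esub: "?E \<subseteq> ?D2" using S_set_sub g h by fastforce
  have finE: "finite ?E" using finite_S_set by simp
  define f where "f e b = (if e \<in> ?E then (if b then 1 else 0) else (1::real))" for e b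
  have mk: "t mod k + 1 \<in> {1..k}" for t using k by (simp add: Suc_leI)
  have Sdesc: "(\<forall>e\<in>?E. M e) \<longleftrightarrow> (\<forall>t\<in>{1..k}. M (g t, h t) \<and> M (g (t mod k + 1), h t))" for M
  proof
    assume H: "\<forall>e\<in>?E. M e"
    show "\<forall>t\<in>{1..k}. M (g t, h t) \<and> M (g (t mod k + 1), h t)"
    proof
      fix t assume t: "t \<in> {1..k}"
      have "(t, t) \<in> S_set k" "(t mod k + 1, t) \<in> S_set k" using t unfolding S_set_def by auto
      then have "(g t, h t) \<in> ?E" "(g (t mod k + 1), h t) \<in> ?E" by force+
      then show "M (g t, h t) \<and> M (g (t mod k + 1), h t)" using H by blast
    qed
  next
    assume H: "\<forall>t\<in>{1..k}. M (g t, h t) \<and> M (g (t mod k + 1), h t)"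
    show "\<forall>e\<in>?E. M e"
    proof
      fix e assume "e \<in> ?E"
      then obtain x where x: "x \<in> S_set k" "e = (\<lambda>(a,b). (g a, h b)) x" by blast
      then obtain t where "t \<in> {1..k}" "x = (t, t) \<or> x = (t mod k + 1, t)" unfolding S_set_def by blast
      then show "M e" using H x by auto
    qed
  qed
  have eq: "(\<Prod>t\<in>{1..k}. to_matrix d M $$ (g t, h t) * to_matrix d M $$ (g (t mod k + 1), h t))
      = (\<Prod>e\<in>?D2. f e (M e))" for M
  proof -
    have "(\<Prod>t\<in>{1..k}. to_matrix d M $$ (g t, h t) * to_matrix d M $$ (g (t mod k + 1), h t))
        = (\<Prod>t\<in>{1..k}. if M (g t, h t) \<and> M (g (t mod k + 1), h t) then 1 else 0)"
    proof (rule prod.cong[OF refl])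
      fix t assume t: "t \<in> {1..k}"
      have "g t < d" "h t < d" "g (t mod k + 1) < d" using g h t mk by auto
      then show "to_matrix d M $$ (g t, h t) * to_matrix d M $$ (g (t mod k + 1), h t)
          = (if M (g t, h t) \<and> M (g (t mod k + 1), h t) then 1 else 0)"
        unfolding to_matrix_def by simp
    qed
    also have "\<dots> = (if \<forall>e\<in>?E. M e then 1 else 0)"
      by (simp only: prod_indicator[OF finite_atLeastAtMost] Sdesc)
    also have "\<dots> = (if \<forall>e\<in>?D2. e \<in> ?E \<longrightarrow> M e then 1 else 0)"
    proof -
      have iff: "(\<forall>e\<in>?E. M e) \<longleftrightarrow> (\<forall>e\<in>?D2. e \<in> ?E \<longrightarrow> M e)" using Esub by blast
      show ?thesis by (simp only: iff)
    qed
    also have "\<dots> = (\<Prod>e\<in>?D2. if e \<in> ?E \<longrightarrow> M e then 1 else 0)"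
      by (rule prod_indicator[symmetric]) simp
    also have "\<dots> = (\<Prod>e\<in>?D2. f e (M e))"
      unfolding f_def by (rule prod.cong) auto
    finally show ?thesis .
  qed
  have "measure_pmf.expectation (bernoulli_matrix_pmf d)
          (\<lambda>M. \<Prod>t\<in>{1..k}. to_matrix d M $$ (g t, h t) * to_matrix d M $$ (g (t mod k + 1), h t))
      = measure_pmf.expectation (bernoulli_matrix_pmf d) (\<lambda>M. \<Prod>e\<in>?D2. f e (M e))"
    by (simp only: eq)
  also have "\<dots> = (\<Prod>e\<in>?D2. measure_pmf.expectation (bernoulli_pmf (1 / real d)) (\<lambda>v. f e v))"
    unfolding bernoulli_matrix_pmf_def
    by (rule expectation_prod_Pi_pmf) (auto simp: f_def intro!: integrable_measure_pmf_finite)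
  also have "\<dots> = (\<Prod>e\<in>?D2. if e \<in> ?E then 1 / real d else 1)"
    using d by (intro prod.cong refl) (simp add: f_def)
  also have "\<dots> = (\<Prod>e\<in>?E. 1 / real d)"
    by (rule prod.mono_neutral_cong_right) (use Esub finE in auto)
  also have "\<dots> = (1 / real d) ^ card ?E" by simp
  finally show ?thesis .
qed
lemma expect_trace:
  assumes d: "d \<ge> 1" and k: "k \<ge> 1"
  shows "measure_pmf.expectation (bernoulli_matrix_pmf d)
           (\<lambda>M. mat_trace ((to_matrix d M * (to_matrix d M)\<^sup>T) ^\<^sub>m k))
       = (\<Sum>g \<in> {1..k} \<rightarrow>\<^sub>E {..<d}. \<Sum>h \<in> {1..k} \<rightarrow>\<^sub>E {..<d}.
            (1 / real d) ^ card ((\<lambda>(a,b). (g a, h b)) ` S_set k))"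
proof -
  have car: "to_matrix d M \<in> carrier_mat d d" for M unfolding to_matrix_def by simp
  have "measure_pmf.expectation (bernoulli_matrix_pmf d)
           (\<lambda>M. mat_trace ((to_matrix d M * (to_matrix d M)\<^sup>T) ^\<^sub>m k))
      = measure_pmf.expectation (bernoulli_matrix_pmf d)
           (\<lambda>M. \<Sum>g \<in> {1..k} \<rightarrow>\<^sub>E {..<d}. \<Sum>h \<in> {1..k} \<rightarrow>\<^sub>E {..<d}.
      \<Prod>t\<in>{1..k}. to_matrix d M $$ (g t, h t) * to_matrix d M $$ (g (t mod k + 1), h t))"
    by (simp only: trace_formula[OF car k])
  also have "\<dots> = (\<Sum>g \<in> {1..k} \<rightarrow>\<^sub>E {..<d}. \<Sum>h \<in> {1..k} \<rightarrow>\<^sub>E {..<d}.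
      measure_pmf.expectation (bernoulli_matrix_pmf d) (\<lambda>M.
      \<Prod>t\<in>{1..k}. to_matrix d M $$ (g t, h t) * to_matrix d M $$ (g (t mod k + 1), h t)))"
    by (simp add: Bochner_Integration.integral_sum integrable_bm)
  also have "\<dots> = (\<Sum>g \<in> {1..k} \<rightarrow>\<^sub>E {..<d}. \<Sum>h \<in> {1..k} \<rightarrow>\<^sub>E {..<d}.
            (1 / real d) ^ card ((\<lambda>(a,b). (g a, h b)) ` S_set k))"
    by (intro sum.cong refl expect_term[OF d k])
  finally show ?thesis .
qed

definition Nfib :: "nat \<Rightarrow> nat \<Rightarrow> nat set set \<Rightarrow> nat" where
  "Nfib d k p = card {i \<in> {1..k} \<rightarrow>\<^sub>E {..<d}. ker i k = p}"

lemma group_sum: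
  shows "(\<Sum>g \<in> {1..k} \<rightarrow>\<^sub>E {..<d}. \<Sum>h \<in> {1..k} \<rightarrow>\<^sub>E {..<d}.
            (1 / real d) ^ card ((\<lambda>(a,b). (g a, h b)) ` S_set k))
       = (\<Sum>q \<in> set_partitions k \<times> set_partitions k.
            real (Nfib d k (fst q)) * real (Nfib d k (snd q)) * (1 / real d) ^ card (joint_partition k (fst q) (snd q)))"
proof -
  let ?I = "{1..k} \<rightarrow>\<^sub>E {..<d}"
  let ?P = "set_partitions k"
  let ?G = "\<lambda>q. (1 / real d) ^ card (joint_partition k (fst q) (snd q))"
  let ?key = "\<lambda>x. (ker (fst x) k, ker (snd x) k)"
  have finI: "finite ?I" by (simp add: finite_PiE)
  have finP: "finite ?P" unfolding set_partitions_def by (rule finitely_many_partition_on) simp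
  have "(\<Sum>g \<in> ?I. \<Sum>h \<in> ?I. (1 / real d) ^ card ((\<lambda>(a,b). (g a, h b)) ` S_set k))
      = (\<Sum>x \<in> ?I \<times> ?I. ?G (?key x))"
    by (simp add: sum.cartesian_product joint_ker case_prod_unfold)
  also have "\<dots> = (\<Sum>q \<in> ?P \<times> ?P. \<Sum>x \<in> {x \<in> ?I \<times> ?I. ?key x = q}. ?G (?key x))"
    by (rule sum.group[symmetric]) (use finI finP ker_in in auto)
  also have "\<dots> = (\<Sum>q \<in> ?P \<times> ?P. real (Nfib d k (fst q)) * real (Nfib d k (snd q)) * ?G q)"
  proof (rule sum.cong[OF refl])
    fix q assume "q \<in> ?P \<times> ?P"
    have "{x \<in> ?I \<times> ?I. ?key x = q} = {i \<in> ?I. ker i k = fst q} \<times> {i \<in> ?I. ker i k = snd q}"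
      by (cases q) auto
    then have c: "card {x \<in> ?I \<times> ?I. ?key x = q} = Nfib d k (fst q) * Nfib d k (snd q)"
      unfolding Nfib_def by (simp add: card_cartesian_product)
    have "(\<Sum>x \<in> {x \<in> ?I \<times> ?I. ?key x = q}. ?G (?key x)) = (\<Sum>x \<in> {x \<in> ?I \<times> ?I. ?key x = q}. ?G q)"
      by (rule sum.cong) auto
    also have "\<dots> = real (card {x \<in> ?I \<times> ?I. ?key x = q}) * ?G q" by simp
    finally show "(\<Sum>x \<in> {x \<in> ?I \<times> ?I. ?key x = q}. ?G (?key x)) = real (Nfib d k (fst q)) * real (Nfib d k (snd q)) * ?G q"
      using c by simp
  qed
  finally show ?thesis .
qed
lemma exists_ker:
  assumes p: "p \<in> set_partitions k"
  shows "\<exists>i. ker i k = p"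
proof -
  have "card {i \<in> {1..k} \<rightarrow>\<^sub>E {..<card p}. ker i k = p} = prod ((-) (card p)) {0..<card p}"
    by (rule count_fiber[OF p])
  also have "\<dots> > 0" by (rule prod_pos) auto
  finally have "{i \<in> {1..k} \<rightarrow>\<^sub>E {..<card p}. ker i k = p} \<noteq> {}" by (metis card.empty less_irrefl)
  then show ?thesis by blast
qed

lemma partition_ineq:
  assumes k: "k \<ge> 1" and p1: "p1 \<in> set_partitions k" and p2: "p2 \<in> set_partitions k"
  shows "card p1 + card p2 \<le> card (joint_partition k p1 p2) + 1"
proof -
  obtain i where i: "ker i k = p1" using exists_ker[OF p1] by blast
  obtain j where j: "ker j k = p2" using exists_ker[OF p2] by blast
  show ?thesis using walk_bound[OF k, of i j] unfolding i[symmetric] j[symmetric] card_ker joint_ker .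
qed

lemma Nfib_real:
  assumes p: "p \<in> set_partitions k" and d: "d \<ge> card p" and d0: "d > 0"
  shows "real (Nfib d k p) = real d ^ card p * (\<Prod>m\<in>{0..<card p}. 1 - real m / real d)"
proof -
  have "real (Nfib d k p) = (\<Prod>m\<in>{0..<card p}. real (d - m))"
    unfolding Nfib_def count_fiber[OF p] by (simp add: of_nat_prod)
  also have "\<dots> = (\<Prod>m\<in>{0..<card p}. real d * (1 - real m / real d))"
    using d d0 by (intro prod.cong refl) (auto simp: of_nat_diff field_simps)
  also have "\<dots> = real d ^ card p * (\<Prod>m\<in>{0..<card p}. 1 - real m / real d)"
    by (simp add: prod.distrib)
  finally show ?thesis .
qed

lemma F_lim: "((\<lambda>d. \<Prod>m\<in>{0..<a}. 1 - real m / real d) \<longlongrightarrow> 1) sequentially"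
proof -
  have "((\<lambda>d. \<Prod>m\<in>{0..<a}. 1 - real m / real d) \<longlongrightarrow> (\<Prod>m\<in>{0..<a}. 1 - 0)) sequentially"
    by (intro tendsto_prod tendsto_diff tendsto_const lim_const_over_n)
  then show ?thesis by simp
qed

lemma pow_lim: "((\<lambda>d. (1 / real d) ^ n) \<longlongrightarrow> (if n = 0 then 1 else 0)) sequentially"
proof (cases "n = 0")
  case True then show ?thesis by simp
next
  case False
  have "((\<lambda>d. (1 / real d) ^ n) \<longlongrightarrow> 0 ^ n) sequentially"
    by (intro tendsto_power lim_1_over_n)
  moreover have "(0::real) ^ n = 0" using False by simp
  ultimately show ?thesis using False by (simp only: if_False)
qed

lemma term_lim:
  assumes k: "k \<ge> 1" and p1: "p1 \<in> set_partitions k" and p2: "p2 \<in> set_partitions k"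
  shows "((\<lambda>d. 1 / real d * (real (Nfib d k p1) * real (Nfib d k p2) * (1 / real d) ^ card (joint_partition k p1 p2)))
     \<longlongrightarrow> (if int (card p1) + int (card p2) - int (card (joint_partition k p1 p2)) = 1 then 1 else 0)) sequentially"
proof -
  define a where "a = card p1"
  define b where "b = card p2"
  define J where "J = card (joint_partition k p1 p2)"
  define n where "n = J + 1 - (a + b)"
  have ab: "a + b \<le> J + 1" using partition_ineq[OF k p1 p2] unfolding a_def b_def J_def .
  then have Jn: "J + 1 = n + a + b" unfolding n_def by simp
  let ?F = "\<lambda>a d. \<Prod>m\<in>{0..<a}. 1 - real m / real d"
  have ev: "eventually (\<lambda>d. ?F a d * ?F b d * (1 / real d) ^ n =
      1 / real d * (real (Nfib d k p1) * real (Nfib d k p2) * (1 / real d) ^ J)) sequentially"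
    using eventually_ge_at_top[of "a + b + 1"]
  proof eventually_elim
    case (elim d)
    then have d0: "d > 0" and da: "d \<ge> a" and db: "d \<ge> b" by auto
    have "1 / real d * (real (Nfib d k p1) * real (Nfib d k p2) * (1 / real d) ^ J)
        = real d ^ a * real d ^ b * ((1 / real d) ^ (J + 1)) * (?F a d * ?F b d)"
      using Nfib_real[OF p1, of d] Nfib_real[OF p2, of d] d0 da db unfolding a_def b_def
      by (simp add: field_simps)
    also have "(1 / real d) ^ (J + 1) = (1 / real d) ^ n * (1 / real d) ^ a * (1 / real d) ^ b"
      unfolding Jn by (simp add: power_add)
    finally show ?case using d0 by (simp add: field_simps)
  qed
  have "((\<lambda>d. ?F a d * ?F b d * (1 / real d) ^ n) \<longlongrightarrow> 1 * 1 * (if n = 0 then 1 else 0)) sequentially"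
    by (intro tendsto_mult F_lim pow_lim)
  then have "((\<lambda>d. 1 / real d * (real (Nfib d k p1) * real (Nfib d k p2) * (1 / real d) ^ J))
      \<longlongrightarrow> (if n = 0 then 1 else 0)) sequentially"
    using Lim_transform_eventually[OF _ ev] by simp
  moreover have "(n = 0) \<longleftrightarrow> int a + int b - int J = 1" using ab unfolding n_def by linarith
  ultimately show ?thesis unfolding a_def b_def J_def by simp
qed

theorem proposition1:
  fixes k :: nat
  assumes "k \<ge> 1"
  shows "(\<lambda>d. (1 / real d) *
            measure_pmf.expectation (bernoulli_matrix_pmf d)
              (\<lambda>M. mat_trace ((to_matrix d M * (to_matrix d M)\<^sup>T) ^\<^sub>m k)))
         \<longlonglongrightarrow> real (card {(p1, p2). p1 \<in> set_partitions k \<and> p2 \<in> set_partitions k \<and>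
                 int (card p1) + int (card p2) - int (card (joint_partition k p1 p2)) = 1})"
proof -
  let ?P = "set_partitions k"
  let ?c = "\<lambda>q. int (card (fst q)) + int (card (snd q)) - int (card (joint_partition k (fst q) (snd q))) = 1"
  let ?T = "\<lambda>q d. 1 / real d * (real (Nfib d k (fst q)) * real (Nfib d k (snd q)) * (1 / real d) ^ card (joint_partition k (fst q) (snd q)))"
  have finP: "finite ?P" unfolding set_partitions_def by (rule finitely_many_partition_on) simp
  have ev: "eventually (\<lambda>d. (\<Sum>q\<in>?P \<times> ?P. ?T q d) = (1 / real d) *
            measure_pmf.expectation (bernoulli_matrix_pmf d)
              (\<lambda>M. mat_trace ((to_matrix d M * (to_matrix d M)\<^sup>T) ^\<^sub>m k))) sequentially"
    using eventually_ge_at_top[of 1]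
  proof eventually_elim
    case (elim d)
    show ?case unfolding expect_trace[OF elim assms] group_sum by (simp add: sum_distrib_left)
  qed
  have "((\<lambda>d. \<Sum>q\<in>?P \<times> ?P. ?T q d) \<longlongrightarrow> (\<Sum>q\<in>?P \<times> ?P. if ?c q then 1 else 0)) sequentially"
  proof (rule tendsto_sum)
    fix q assume "q \<in> ?P \<times> ?P"
    then show "((\<lambda>d. ?T q d) \<longlongrightarrow> (if ?c q then 1 else 0)) sequentially"
      using term_lim[OF assms, of "fst q" "snd q"] by auto
  qed
  moreover have "(\<Sum>q\<in>?P \<times> ?P. if ?c q then 1 else 0) = real (card {(p1, p2). p1 \<in> ?P \<and> p2 \<in> ?P \<and>
                 int (card p1) + int (card p2) - int (card (joint_partition k p1 p2)) = 1})"
  proof -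
    have "(\<Sum>q\<in>?P \<times> ?P. if ?c q then 1 else (0::real)) = (\<Sum>q\<in>{q \<in> ?P \<times> ?P. ?c q}. 1)"
      by (rule sum.inter_filter[symmetric]) (use finP in simp)
    also have "{q \<in> ?P \<times> ?P. ?c q} = {(p1, p2). p1 \<in> ?P \<and> p2 \<in> ?P \<and>
                 int (card p1) + int (card p2) - int (card (joint_partition k p1 p2)) = 1}"
      by auto
    finally show ?thesis by simp
  qed
  ultimately show ?thesis using Lim_transform_eventually[OF _ ev] by simp
qed

end
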